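(* Let $N\ge4$ be even and, for $n=0,\dots,N-1$, let $z_{N,n}=e^{2\pi i(n+1)/N}-e^{2\pi in/N}$. Then the region $$\hat\Omega_N=\Big\{z\in\mathbb C:\sum_{n=0}^{N/2-1}|z\wedge z_{N,n}|\le1\Big\}$$ is a regular $N$-gon inscribed in the circle of radius $\frac12\sec(\pi/N)$ centered at $0$, and its area is $\frac N4\tan(\pi/N)$.
   Context: For $z,w\in\mathbb C$, $|z\wedge w|=|\operatorname{Im}(\bar zw)|$ is the area of the parallelogram spanned by $z$ and $w$. The $z_{N,n}$ are the side vectors of the regular $N$-gon with vertices at the $N$-th roots of unity. *)

theory Defs
  imports "HOL-Analysis.Analysis"
begin

definition wedge :: "complex \<Rightarrow> complex \<Rightarrow> real" where
  "wedge z w = Im (cnj z * w)"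

definition zN :: "nat \<Rightarrow> nat \<Rightarrow> complex" where
  "zN N n = cis (2 * pi * real (n + 1) / real N) - cis (2 * pi * real n / real N)"

definition Omega_hat :: "nat \<Rightarrow> complex set" where
  "Omega_hat N = {z. (\<Sum>n<N div 2. \<bar>wedge z (zN N n)\<bar>) \<le> 1}"

definition regular_ngon_inscribed :: "nat \<Rightarrow> complex \<Rightarrow> real \<Rightarrow> complex set \<Rightarrow> bool" where
  "regular_ngon_inscribed N c R P \<longleftrightarrow>
     (\<exists>\<theta>::real. P = convex hull {c + complex_of_real R * cis (\<theta> + 2 * pi * real k / real N) | k. k < N})"

end

theory Submission
  imports Defs
begin


definition tov :: "complex \<Rightarrow> real^2" where "tov z = vector [Re z, Im z]"
definition ofv :: "real^2 \<Rightarrow> complex" where "ofv x = Complex (x$1) (x$2)"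

lemma tov_ofv[simp]: "tov (ofv x) = x"
  unfolding tov_def ofv_def by (simp add: vec_eq_iff forall_2 vector_2)
lemma ofv_tov[simp]: "ofv (tov z) = z"
  unfolding tov_def ofv_def by (simp add: vector_2 complex_eq_iff)
lemma tov_comp[simp]: "tov z $ 1 = Re z" "tov z $ 2 = Im z"
  unfolding tov_def by (simp_all add: vector_2)

lemma linear_tov: "linear tov"
  by (rule linearI) (simp_all add: vec_eq_iff forall_2)

lemma tov_cbox: "tov ` cbox u v = cbox (tov u) (tov v)"
proof (intro equalityI subsetI)
  fix x assume "x \<in> tov ` cbox u v"
  then show "x \<in> cbox (tov u) (tov v)"
    by (auto simp: in_cbox_complex_iff mem_box_cart forall_2)
next
  fix x assume "x \<in> cbox (tov u) (tov v)"
  then have "ofv x \<in> cbox u v" by (auto simp: in_cbox_complex_iff mem_box_cart forall_2 ofv_def)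
  then show "x \<in> tov ` cbox u v" by (metis image_eqI tov_ofv)
qed

lemma ofv_cbox: "ofv ` cbox u v = cbox (ofv u) (ofv v)"
proof (intro equalityI subsetI)
  fix x assume "x \<in> ofv ` cbox u v"
  then show "x \<in> cbox (ofv u) (ofv v)"
    by (auto simp: in_cbox_complex_iff mem_box_cart forall_2 ofv_def)
next
  fix x assume "x \<in> cbox (ofv u) (ofv v)"
  then have "tov x \<in> cbox u v" by (auto simp: in_cbox_complex_iff mem_box_cart forall_2 ofv_def)
  then show "x \<in> ofv ` cbox u v" by (metis image_eqI ofv_tov)
qed

lemma content_tov: "Henstock_Kurzweil_Integration.content (tov ` cbox u v) = Henstock_Kurzweil_Integration.content (cbox u v)"
proof -
  have e: "cbox (tov u) (tov v) = {} \<longleftrightarrow> cbox u v = {}"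
    by (metis image_is_empty tov_cbox)
  show ?thesis unfolding tov_cbox
    by (simp add: content_cbox_if_cart content_cbox_if e UNIV_2 Basis_complex_def)
qed

lemma measure_ofv:
  assumes "bounded T" "T \<in> lmeasurable"
  shows "ofv ` T \<in> lmeasurable \<and> measure lebesgue (ofv ` T) = measure lebesgue T"
proof -
  obtain a b where ab: "T \<subseteq> cbox a b" using assms(1) bounded_subset_cbox_symmetric by blast
  have "(indicat_real T has_integral measure lebesgue T) UNIV"
    using assms(2) lmeasurable_iff_has_integral by blast
  then have "((\<lambda>x. if x \<in> cbox a b then indicat_real T x else 0) has_integral measure lebesgue T) UNIV"
    by (rule has_integral_eq[rotated]) (use ab in \<open>auto simp: indicator_def\<close>)
  then have i1: "(indicat_real T has_integral measure lebesgue T) (cbox a b)"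
    using has_integral_restrict_UNIV by blast
  have cont: "isCont tov x" for x
    using linear_tov by (simp add: linear_continuous_at linear_linear)
  have tw: "((\<lambda>x. indicat_real T (tov x)) has_integral (1/1) *\<^sub>R measure lebesgue T) (ofv ` cbox a b)"
    by (rule has_integral_twiddle[where g=tov and h=ofv and r=1])
       (use cont i1 in \<open>auto simp: tov_cbox ofv_cbox content_tov[unfolded tov_cbox]\<close>)
  have "(indicat_real (ofv ` T) has_integral measure lebesgue T) (ofv ` cbox a b)"
  proof -
    have "indicat_real (ofv ` T) = (\<lambda>x. indicat_real T (tov x))"
    proof
      fix x
      have "x \<in> ofv ` T \<longleftrightarrow> tov x \<in> T" by (metis image_iff ofv_tov tov_ofv)
      then show "indicat_real (ofv ` T) x = indicat_real T (tov x)" by (simp add: indicator_def)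
    qed
    then show ?thesis using tw by simp
  qed
  then have "(indicat_real (ofv ` T) has_integral measure lebesgue T) UNIV"
    by (rule has_integral_on_superset) (use ab in \<open>auto simp: indicator_def\<close>)
  then show ?thesis using lmeasurable_iff_indicator_has_integral by metis
qed

lemma linear_ofv: "linear ofv"
  by (rule linearI) (simp_all add: ofv_def complex_eq_iff)

lemma ofv_0[simp]: "ofv 0 = 0" by (simp add: ofv_def complex_eq_iff)

lemma triangle_measure:
  fixes a b :: complex
  shows "convex hull {0, a, b} \<in> lmeasurable \<and>
         measure lebesgue (convex hull {0, a, b}) = \<bar>wedge a b\<bar> / 2"
proof -
  let ?T = "convex hull {0, tov a, tov b}"
  have cT: "compact ?T" by (intro finite_imp_compact_convex_hull) auto
  have img: "ofv ` ?T = convex hull {0, a, b}"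
    by (simp add: convex_hull_linear_image[OF linear_ofv])
  have "measure lebesgue ?T = Henstock_Kurzweil_Integration.content ?T"
    using cT by (intro measure_completion) (auto dest: compact_imp_closed)
  also have "\<dots> = \<bar>wedge a b\<bar> / 2"
    by (subst content_triangle) (simp add: wedge_def abs_minus_commute algebra_simps)
  finally have m: "measure lebesgue ?T = \<bar>wedge a b\<bar> / 2" .
  from measure_ofv[of ?T] cT m img show ?thesis
    by (auto simp: compact_imp_bounded lmeasurable_compact)
qed



definition sd :: "nat \<Rightarrow> int \<Rightarrow> real" where
  "sd N e = sin (2 * pi * of_int e / real N)"

definition ww :: "nat \<Rightarrow> int \<Rightarrow> complex" where
  "ww N j = cis (pi / 2 + pi / real N + 2 * pi * of_int j / real N)"

lemma wedge_cis: "wedge (cis x) (cis y) = sin (y - x)"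
  by (simp add: wedge_def sin_diff algebra_simps)

lemma wedge_scale: "wedge (complex_of_real r * a) (complex_of_real c * b) = r * c * wedge a b"
  by (simp add: wedge_def algebra_simps)

lemma wedge_lin: "wedge (complex_of_real s * a + complex_of_real t * b) z = s * wedge a z + t * wedge b z"
  by (simp add: wedge_def algebra_simps)

lemma wedge_ww: "N > 0 \<Longrightarrow> wedge (ww N j) (ww N k) = sd N (k - j)"
  by (simp add: ww_def sd_def wedge_cis diff_divide_distrib algebra_simps)

lemma cis_int_2pi: "cis (x + 2 * pi * of_int q) = cis x"
proof -
  have "cis (2 * pi * of_int q) = 1" by (rule cis_multiple_2pi) auto
  then show ?thesis by (metis cis_mult mult_1_right)
qed

lemma sin_int_2pi: "sin (x + 2 * pi * of_int q) = sin x"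
  using arg_cong[OF cis_int_2pi[of x q], of Im] by simp

lemma sd_period: "N > 0 \<Longrightarrow> sd N (e + int N * q) = sd N e"
proof -
  assume N: "N > 0"
  have "2 * pi * of_int (e + int N * q) / real N = 2 * pi * of_int e / real N + 2 * pi * of_int q"
    using N by (simp add: field_simps)
  then show ?thesis by (simp add: sd_def sin_int_2pi)
qed

lemma sd_mod: "N > 0 \<Longrightarrow> sd N e = sd N (e mod int N)"
  by (metis sd_period div_mult_mod_eq add.commute mult.commute)

lemma ww_period: "N > 0 \<Longrightarrow> ww N (j + int N * q) = ww N j"
proof -
  assume N: "N > 0"
  have "pi / 2 + pi / real N + 2 * pi * of_int (j + int N * q) / real N =
        (pi / 2 + pi / real N + 2 * pi * of_int j / real N) + 2 * pi * of_int q"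
    using N by (simp add: field_simps)
  then show ?thesis unfolding ww_def by (metis cis_int_2pi)
qed

lemma ww_mod: "N > 0 \<Longrightarrow> ww N j = ww N (j mod int N)"
  by (metis ww_period div_mult_mod_eq add.commute mult.commute)

lemma sd_half: "N = 2 * M \<Longrightarrow> M > 0 \<Longrightarrow> sd N (e + int M) = - sd N e"
proof -
  assume N: "N = 2 * M" "M > 0"
  have "2 * pi * of_int (e + int M) / real N = 2 * pi * of_int e / real N + pi"
    using N by (simp add: field_simps)
  then show ?thesis by (simp add: sd_def)
qed

lemma sd_nonneg: "N = 2 * M \<Longrightarrow> M > 0 \<Longrightarrow> 0 \<le> e \<Longrightarrow> e \<le> int M \<Longrightarrow> sd N e \<ge> 0"
proof -
  assume N: "N = 2 * M" "M > 0" and e: "0 \<le> e" "e \<le> int M"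
  have "real_of_int e \<le> real M" using e by linarith
  then have "2 * pi * of_int e / real N \<le> pi" using N by (simp add: field_simps)
  moreover have "0 \<le> 2 * pi * of_int e / real N" using e N by simp
  ultimately show ?thesis unfolding sd_def by (rule sin_ge_zero[rotated]) 
qed

lemma sd_nonpos: "N = 2 * M \<Longrightarrow> M > 0 \<Longrightarrow> int M \<le> e \<Longrightarrow> e \<le> int N \<Longrightarrow> sd N e \<le> 0"
proof -
  assume N: "N = 2 * M" "M > 0" and e: "int M \<le> e" "e \<le> int N"
  have "sd N ((e - int M) + int M) = - sd N (e - int M)" using sd_half N by blast
  moreover have "sd N (e - int M) \<ge> 0" using sd_nonneg[OF N] e N by simp
  ultimately show ?thesis by simp
qed

lemma sd_prod: "N = 2 * M \<Longrightarrow> M > 0 \<Longrightarrow> sd N e * sd N (e - 1) \<ge> 0"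
proof -
  assume N: "N = 2 * M" "M > 0"
  define e' where "e' = e mod int N"
  have Np: "N > 0" using N by simp
  have r: "0 \<le> e'" "e' < int N" using Np by (simp_all add: e'_def)
  have a: "sd N e = sd N e'" using sd_mod[OF Np] e'_def by simp
  have b: "sd N (e - 1) = sd N (e' - 1)"
  proof -
    have "(e - 1) mod int N = (e' - 1) mod int N" unfolding e'_def by (simp add: mod_diff_left_eq)
    then show ?thesis using sd_mod[OF Np] by metis
  qed
  show ?thesis
  proof (cases "e' = 0")
    case True then show ?thesis using a by (simp add: sd_def)
  next
    case False
    show ?thesis
    proof (cases "e' \<le> int M")
      case True
      then show ?thesis using a b False r sd_nonneg[OF N, of e'] sd_nonneg[OF N, of "e' - 1"] by simp
    next
      case c: False
      have "sd N e' \<le> 0" using sd_nonpos[OF N, of e'] c r by simp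
      moreover have "sd N (e' - 1) \<le> 0" using sd_nonpos[OF N, of "e' - 1"] c r by simp
      ultimately show ?thesis using a b by (simp add: mult_nonpos_nonpos)
    qed
  qed
qed

lemma telescope:
  "(\<Sum>n<K. 2 * sin a * sin (2 * a * real n)) = cos a - cos (2 * a * real K - a)"
proof (induction K)
  case 0 then show ?case by simp
next
  case (Suc K)
  have "cos (2 * a * real K - a) - cos (2 * a * real K + a) = 2 * sin a * sin (2 * a * real K)"
    by (simp add: cos_diff cos_add)
  moreover have "2 * a * real (Suc K) - a = 2 * a * real K + a" by (simp add: algebra_simps)
  moreover have "(\<Sum>n<Suc K. 2 * sin a * sin (2 * a * real n)) =
     (\<Sum>n<K. 2 * sin a * sin (2 * a * real n)) + 2 * sin a * sin (2 * a * real K)" by simp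
  ultimately show ?case using Suc by (simp only:)
qed

lemma sum_sd0: "N = 2 * M \<Longrightarrow> M > 0 \<Longrightarrow>
  (\<Sum>n<M. \<bar>sd N (int n)\<bar>) = cos (pi / real N) / sin (pi / real N)"
proof -
  assume N: "N = 2 * M" "M > 0"
  define a where "a = pi / real N"
  have a0: "0 < a" "a < pi" using N by (auto simp: a_def field_simps)
  have sa: "sin a > 0" using a0 sin_gt_zero by blast
  have "(\<Sum>n<M. \<bar>sd N (int n)\<bar>) = (\<Sum>n<M. sin (2 * a * real n))"
  proof (intro sum.cong refl)
    fix n assume "n \<in> {..<M}"
    then have "sd N (int n) \<ge> 0" using sd_nonneg[OF N, of "int n"] by simp
    then show "\<bar>sd N (int n)\<bar> = sin (2 * a * real n)" by (simp add: sd_def a_def)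
  qed
  moreover have "2 * sin a * (\<Sum>n<M. sin (2 * a * real n)) = 2 * cos a"
  proof -
    have "2 * sin a * (\<Sum>n<M. sin (2 * a * real n)) = cos a - cos (2 * a * real M - a)"
      by (simp add: telescope[symmetric] sum_distrib_left)
    also have "2 * a * real M = pi" using N by (simp add: a_def)
    finally show ?thesis by simp
  qed
  ultimately show ?thesis using sa by (simp add: a_def[symmetric] field_simps)
qed

lemma sum_sd_shift: "N = 2 * M \<Longrightarrow> M > 0 \<Longrightarrow>
  (\<Sum>n<M. \<bar>sd N (int n - (j + 1))\<bar>) = (\<Sum>n<M. \<bar>sd N (int n - j)\<bar>)"
proof -
  assume N: "N = 2 * M" "M > 0"
  then obtain m where m: "M = Suc m" using gr0_implies_Suc by blast
  have "(\<Sum>n<M. \<bar>sd N (int n - (j + 1))\<bar>) = \<bar>sd N (- 1 - j)\<bar> + (\<Sum>i<m. \<bar>sd N (int i - j)\<bar>)"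
    unfolding m by (subst sum.lessThan_Suc_shift) (simp add: algebra_simps)
  moreover have "(\<Sum>n<M. \<bar>sd N (int n - j)\<bar>) = (\<Sum>i<m. \<bar>sd N (int i - j)\<bar>) + \<bar>sd N (int m - j)\<bar>"
    unfolding m by simp
  moreover have "sd N (int m - j) = - sd N (- 1 - j)"
    using sd_half[OF N, of "- 1 - j"] m by (simp add: algebra_simps)
  ultimately show ?thesis by simp
qed

lemma sum_sd: "N = 2 * M \<Longrightarrow> M > 0 \<Longrightarrow>
  (\<Sum>n<M. \<bar>sd N (int n - j)\<bar>) = cos (pi / real N) / sin (pi / real N)"
proof -
  assume N: "N = 2 * M" "M > 0"
  have "(\<Sum>n<M. \<bar>sd N (int n - j)\<bar>) = (\<Sum>n<M. \<bar>sd N (int n - 0)\<bar>)"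
  proof (induction j rule: int_induct[where k=0])
    case base then show ?case by simp
  next
    case (step1 i) then show ?case using sum_sd_shift[OF N, of i] by simp
  next
    case (step2 i) then show ?case using sum_sd_shift[OF N, of "i - 1"] by simp
  qed
  then show ?thesis using sum_sd0[OF N] by simp
qed



definition RR :: "nat \<Rightarrow> real" where "RR N = 1 / (2 * cos (pi / real N))"
definition vv :: "nat \<Rightarrow> int \<Rightarrow> complex" where "vv N j = complex_of_real (RR N) * ww N j"
definition SS :: "nat \<Rightarrow> complex \<Rightarrow> real" where
  "SS N z = (\<Sum>n<N div 2. \<bar>wedge z (zN N n)\<bar>)"

lemma zN_eq: "N > 0 \<Longrightarrow> zN N n = complex_of_real (2 * sin (pi / real N)) * ww N (int n)"
proof -
  assume N: "N > 0"
  define a where "a = pi / real N"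
  define y where "y = 2 * pi * real n / real N + a"
  have e1: "2 * pi * real (n + 1) / real N = y + a" using N by (simp add: y_def a_def field_simps)
  have e2: "2 * pi * real n / real N = y - a" by (simp add: y_def)
  have e3: "pi / 2 + pi / real N + 2 * pi * real_of_int (int n) / real N = pi / 2 + y"
    by (simp add: y_def a_def)
  have "zN N n = cis (y + a) - cis (y - a)" unfolding zN_def e1 e2 ..
  also have "\<dots> = complex_of_real (2 * sin a) * cis (pi / 2 + y)"
    by (simp add: complex_eq_iff cos_add sin_add cos_diff sin_diff)
  finally show ?thesis unfolding ww_def e3 a_def .
qed

lemma wedge_lin2: "wedge z (complex_of_real s * a + complex_of_real t * b) = s * wedge z a + t * wedge z b"
  by (simp add: wedge_def algebra_simps)

lemma abs_comb: "(A::real) * B \<ge> 0 \<Longrightarrow> s \<ge> 0 \<Longrightarrow> t \<ge> 0 \<Longrightarrow> \<bar>s * A + t * B\<bar> = s * \<bar>A\<bar> + t * \<bar>B\<bar>"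
proof -
  assume h: "A * B \<ge> 0" "s \<ge> 0" "t \<ge> 0"
  have "(A \<ge> 0 \<and> B \<ge> 0) \<or> (A \<le> 0 \<and> B \<le> 0)" using h(1) zero_le_mult_iff by auto
  then show ?thesis
  proof
    assume "A \<ge> 0 \<and> B \<ge> 0"
    then show ?thesis using h by (simp add: abs_of_nonneg)
  next
    assume a: "A \<le> 0 \<and> B \<le> 0"
    then have "s * A \<le> 0" "t * B \<le> 0" using h by (simp_all add: mult_nonneg_nonpos)
    then show ?thesis using a h by (simp add: abs_of_nonpos)
  qed
qed

context
  fixes N M :: nat
  assumes NM: "N = 2 * M" and M2: "M \<ge> 2"
begin

lemma Npos: "N > 0" using NM M2 by simp
lemma Mpos: "M > 0" using M2 by simp
lemma Ndiv: "N div 2 = M" using NM by simp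

lemma a_bounds: "0 < pi / real N" "pi / real N < pi / 2"
  using NM M2 by (auto simp: field_simps)

lemma cos_a: "cos (pi / real N) > 0"
  using a_bounds by (intro cos_gt_zero_pi) auto
lemma sin_a: "sin (pi / real N) > 0"
  using a_bounds pi_gt_zero by (intro sin_gt_zero) linarith+
lemma RR_pos: "RR N > 0" using cos_a by (simp add: RR_def)

lemma sd1_pos: "sd N 1 > 0"
proof -
  have "2 * pi / real N < pi" using NM M2 by (simp add: field_simps)
  moreover have "0 < 2 * pi / real N" using Npos by simp
  ultimately show ?thesis by (simp add: sd_def sin_gt_zero)
qed

lemma sdm1: "sd N (-1) = - sd N 1" by (simp add: sd_def)

lemma wedge_vz: "wedge (vv N j) (zN N n) = RR N * (2 * sin (pi / real N)) * sd N (int n - j)"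
  unfolding vv_def zN_eq[OF Npos] wedge_scale wedge_ww[OF Npos] by simp

lemma SS_vertex: "SS N (vv N j) = 1"
proof -
  have "SS N (vv N j) = (\<Sum>n<M. RR N * (2 * sin (pi / real N)) * \<bar>sd N (int n - j)\<bar>)"
    unfolding SS_def Ndiv wedge_vz using RR_pos sin_a by (simp add: abs_mult)
  also have "\<dots> = RR N * (2 * sin (pi / real N)) * (cos (pi / real N) / sin (pi / real N))"
    by (simp add: sum_distrib_left[symmetric] sum_sd[OF NM Mpos])
  also have "\<dots> = 1" using sin_a cos_a by (simp add: RR_def field_simps)
  finally show ?thesis .
qed

lemma SS_comb:
  assumes "s \<ge> 0" "t \<ge> 0"
  shows "SS N (complex_of_real s * vv N j + complex_of_real t * vv N (j + 1)) = s + t"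
proof -
  have "SS N (complex_of_real s * vv N j + complex_of_real t * vv N (j + 1)) =
        (\<Sum>n<M. s * \<bar>wedge (vv N j) (zN N n)\<bar> + t * \<bar>wedge (vv N (j+1)) (zN N n)\<bar>)"
    unfolding SS_def Ndiv wedge_lin
  proof (intro sum.cong refl abs_comb assms)
    fix n
    have "sd N (int n - j) * sd N (int n - j - 1) \<ge> 0" by (rule sd_prod[OF NM Mpos])
    then have "0 \<le> (RR N * (2 * sin (pi / real N)))^2 * (sd N (int n - j) * sd N (int n - j - 1))"
      by simp
    then show "0 \<le> wedge (vv N j) (zN N n) * wedge (vv N (j + 1)) (zN N n)"
      unfolding wedge_vz by (simp add: power2_eq_square algebra_simps diff_diff_eq)
  qed
  also have "\<dots> = s * SS N (vv N j) + t * SS N (vv N (j + 1))"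
    by (simp add: SS_def Ndiv sum.distrib sum_distrib_left)
  also have "\<dots> = s + t" by (simp add: SS_vertex)
  finally show ?thesis .
qed


lemma sin_d: "sin (2 * pi / real N) > 0" using sd1_pos by (simp add: sd_def)
lemma d_lt_pi: "2 * pi / real N < pi" using NM M2 by (simp add: field_simps)

lemma cis_identity:
  "complex_of_real (sin d) * cis (b + e) =
   complex_of_real (sin (d - e)) * cis b + complex_of_real (sin e) * cis (b + d)"
  by (simp add: complex_eq_iff cos_add sin_add sin_diff cos_diff algebra_simps)

lemma decomp: "\<exists>k<N. \<exists>s t. s \<ge> 0 \<and> t \<ge> 0 \<and>
   z = complex_of_real s * vv N (int k) + complex_of_real t * vv N (int k + 1)"
proof (cases "z = 0")
  case True
  have "complex_of_real 0 * vv N (int 0) + complex_of_real 0 * vv N (int 0 + 1) = z" using True by simp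
  then show ?thesis using Npos by blast
next
  case False
  define th where "th = pi / 2 + pi / real N"
  define d where "d = 2 * pi / real N"
  define ph where "ph = Arg z - th"
  define q where "q = \<lfloor>ph / d\<rfloor>"
  define e where "e = ph - d * of_int q"
  have dpos: "d > 0" using Npos by (simp add: d_def)
  have "of_int q \<le> ph / d" "ph / d < of_int q + 1" unfolding q_def by linarith+
  then have e0: "0 \<le> e" "e < d" using dpos by (auto simp: e_def field_simps)
  have sd: "sin d > 0" using sin_d by (simp add: d_def)
  have dpi: "d < pi" using d_lt_pi by (simp add: d_def)
  have cq: "ww N q = cis (th + d * of_int q)" by (simp add: ww_def th_def d_def)
  have cq1: "ww N (q + 1) = cis (th + d * of_int q + d)"
    unfolding ww_def by (rule arg_cong[where f=cis]) (simp add: th_def d_def add_divide_distrib distrib_left)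
  have zeq: "z = complex_of_real (cmod z) * cis (th + d * of_int q + e)"
  proof -
    have "th + d * of_int q + e = Arg z" by (simp add: e_def ph_def)
    then show ?thesis using rcis_cmod_Arg[of z] by (simp add: rcis_def)
  qed
  define s where "s = cmod z * sin (d - e) / (RR N * sin d)"
  define t where "t = cmod z * sin e / (RR N * sin d)"
  have s0: "s \<ge> 0" unfolding s_def using e0 dpi sd RR_pos
    by (intro divide_nonneg_pos mult_nonneg_nonneg) (auto intro!: sin_ge_zero)
  have t0: "t \<ge> 0" unfolding t_def using e0 dpi sd RR_pos
    by (intro divide_nonneg_pos mult_nonneg_nonneg) (auto intro!: sin_ge_zero)
  have sR: "s * RR N = cmod z / sin d * sin (d - e)" using RR_pos by (simp add: s_def)
  have tR: "t * RR N = cmod z / sin d * sin e" using RR_pos by (simp add: t_def)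
  have "complex_of_real s * vv N q + complex_of_real t * vv N (q + 1) =
        complex_of_real (s * RR N) * cis (th + d * of_int q) + complex_of_real (t * RR N) * cis (th + d * of_int q + d)"
    unfolding vv_def cq cq1 by (simp add: mult.assoc)
  also have "\<dots> = complex_of_real (cmod z / sin d) * (complex_of_real (sin (d - e)) * cis (th + d * of_int q)
          + complex_of_real (sin e) * cis (th + d * of_int q + d))"
    unfolding sR tR by (simp add: distrib_left mult.assoc)
  also have "\<dots> = complex_of_real (cmod z / sin d) * (complex_of_real (sin d) * cis (th + d * of_int q + e))"
    by (simp only: cis_identity[of d "th + d * of_int q" e, symmetric])
  also have "\<dots> = complex_of_real (cmod z / sin d * sin d) * cis (th + d * of_int q + e)"
    by (simp only: of_real_mult mult.assoc)
  also have "\<dots> = z"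
  proof -
    have "cmod z / sin d * sin d = cmod z" using sd by simp
    then show ?thesis by (simp only:) (rule zeq[symmetric])
  qed
  finally have zz: "z = complex_of_real s * vv N q + complex_of_real t * vv N (q + 1)" by simp
  define k where "k = nat (q mod int N)"
  have kq: "int k = q mod int N" using Npos by (simp add: k_def)
  have kN: "k < N" using Npos by (simp add: k_def nat_less_iff)
  have v1: "vv N q = vv N (int k)" using ww_mod[OF Npos, of q] kq by (simp add: vv_def)
  have v2: "vv N (q + 1) = vv N (int k + 1)"
  proof -
    have "(q + 1) mod int N = (int k + 1) mod int N" by (simp add: kq mod_add_left_eq)
    then show ?thesis using ww_mod[OF Npos, of "q+1"] ww_mod[OF Npos, of "int k + 1"] by (simp add: vv_def)
  qed
  have "z = complex_of_real s * vv N (int k) + complex_of_real t * vv N (int k + 1)"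
    using zz by (simp only: v1 v2)
  then show ?thesis using kN s0 t0 by (intro exI[of _ k] conjI exI[of _ s] exI[of _ t]) auto
qed

definition VV where "VV = {0 + complex_of_real (1 / (2 * cos (pi / real N))) *
     cis ((pi / 2 + pi / real N) + 2 * pi * real k / real N) | k. k < N}"

lemma VV_iff: "x \<in> VV \<longleftrightarrow> (\<exists>k<N. x = vv N (int k))"
  by (auto simp: VV_def vv_def ww_def RR_def)

lemma vv_in: "vv N j \<in> VV"
proof -
  have "vv N j = vv N (int (nat (j mod int N)))" using ww_mod[OF Npos, of j] Npos by (simp add: vv_def)
  moreover have "nat (j mod int N) < N" using Npos by (simp add: nat_less_iff)
  ultimately show ?thesis using VV_iff by blast
qed

lemma vv_half: "vv N (j + int M) = - vv N j"
proof -
  have eq: "pi / 2 + pi / real N + 2 * pi * real_of_int (j + int M) / real N =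
        (pi / 2 + pi / real N + 2 * pi * real_of_int j / real N) + pi" using NM M2 by (simp add: field_simps)
  show ?thesis unfolding vv_def ww_def eq minus_cis[symmetric] by simp
qed

lemma zero_in_hull: "0 \<in> convex hull VV"
proof -
  have "(1/2::real) *\<^sub>R vv N 0 + (1/2::real) *\<^sub>R vv N (0 + int M) \<in> convex hull VV"
    by (rule convexD[OF convex_convex_hull]) (auto intro: hull_inc vv_in)
  then show ?thesis by (simp only: vv_half) simp
qed

lemma Omega_SS: "Omega_hat N = {z. SS N z \<le> 1}" by (simp add: Omega_hat_def SS_def)

lemma convex_Omega: "convex (Omega_hat N)"
  unfolding Omega_SS
proof (rule convexI, simp)
  fix x y :: complex and u v :: real
  assume h: "SS N x \<le> 1" "SS N y \<le> 1" "0 \<le> u" "0 \<le> v" "u + v = 1"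
  have "SS N (u *\<^sub>R x + v *\<^sub>R y) \<le> (\<Sum>n<N div 2. u * \<bar>wedge x (zN N n)\<bar> + v * \<bar>wedge y (zN N n)\<bar>)"
    unfolding SS_def scaleR_conv_of_real wedge_lin
  proof (rule sum_mono)
    fix n
    have "\<bar>u * wedge x (zN N n) + v * wedge y (zN N n)\<bar> \<le> \<bar>u * wedge x (zN N n)\<bar> + \<bar>v * wedge y (zN N n)\<bar>"
      by (rule abs_triangle_ineq)
    then show "\<bar>u * wedge x (zN N n) + v * wedge y (zN N n)\<bar> \<le> u * \<bar>wedge x (zN N n)\<bar> + v * \<bar>wedge y (zN N n)\<bar>"
      using h by (simp add: abs_mult)
  qed
  also have "\<dots> = u * SS N x + v * SS N y" by (simp add: SS_def sum.distrib sum_distrib_left)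
  also have "\<dots> \<le> u * 1 + v * 1" using h by (intro add_mono mult_left_mono) auto
  finally show "SS N (u *\<^sub>R x + v *\<^sub>R y) \<le> 1" using h by simp
qed

definition Tk where "Tk k = convex hull {0, vv N (int k), vv N (int k + 1)}"

lemma Tk_sub: "Tk k \<subseteq> convex hull VV"
  unfolding Tk_def using zero_in_hull vv_in by (intro convex_hull_subset) (auto intro: hull_inc)

lemma hull_sub: "convex hull VV \<subseteq> Omega_hat N"
  using convex_Omega SS_vertex VV_iff by (intro hull_minimal) (auto simp: Omega_SS)

lemma Omega_sub: "Omega_hat N \<subseteq> (\<Union>k\<in>{..<N}. Tk k)"
proof
  fix z assume z: "z \<in> Omega_hat N"
  obtain k s t where k: "k < N" "s \<ge> 0" "t \<ge> 0"
    and zz: "z = complex_of_real s * vv N (int k) + complex_of_real t * vv N (int k + 1)"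
    using decomp by blast
  have "s + t \<le> 1" using z SS_comb[OF k(2,3), of "int k"] zz by (simp add: Omega_SS)
  then have "z \<in> Tk k" unfolding Tk_def convex_hull_3
    using k zz by (intro CollectI exI[of _ "1 - s - t"] exI[of _ s] exI[of _ t]) (simp add: scaleR_conv_of_real)
  then show "z \<in> (\<Union>k\<in>{..<N}. Tk k)" using k by blast
qed

lemma Omega_eq_hull: "Omega_hat N = convex hull VV"
  using Omega_sub Tk_sub hull_sub by blast

lemma Omega_eq_Union: "Omega_hat N = (\<Union>k\<in>{..<N}. Tk k)"
  using Omega_sub Tk_sub hull_sub by blast


lemma wedge_r: "wedge z (complex_of_real r * w) = r * wedge z w"
  by (simp add: wedge_def algebra_simps)

lemma wedge_wv: "wedge (ww N a) (complex_of_real s * vv N b + complex_of_real t * vv N c) =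
    s * RR N * sd N (b - a) + t * RR N * sd N (c - a)"
  unfolding wedge_lin2 vv_def wedge_r wedge_ww[OF Npos] by simp

lemma no_overlap:
  assumes jk: "j < N" "k < N" "j \<noteq> k" and st: "s > 0" "t > 0" "s' \<ge> 0" "t' \<ge> 0"
    and eq: "complex_of_real s * vv N (int j) + complex_of_real t * vv N (int j + 1) =
             complex_of_real s' * vv N (int k) + complex_of_real t' * vv N (int k + 1)"
  shows False
proof -
  define J where "J = int j"
  define K where "K = int k"
  note eq' = eq[folded J_def K_def]
  have sd0: "sd N 0 = 0" by (simp add: sd_def)
  have W1: "wedge (ww N J) (complex_of_real s * vv N J + complex_of_real t * vv N (J + 1)) > 0"
    unfolding wedge_wv using st RR_pos sd1_pos by (simp add: sd0)
  have W2: "wedge (ww N (J + 1)) (complex_of_real s * vv N J + complex_of_real t * vv N (J + 1)) < 0"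
    unfolding wedge_wv using st RR_pos sd1_pos by (simp add: sd0 sdm1)
  define e where "e = (if J \<le> K then K - J else K - J + int N)"
  have e1: "1 \<le> e" "e \<le> int N - 1" using jk by (auto simp: e_def J_def K_def)
  have sh: "sd N (K - J + c) = sd N (e + c)" for c
  proof (cases "J \<le> K")
    case True then show ?thesis by (simp add: e_def)
  next
    case False
    have "K - J + c = (e + c) + int N * (-1)" using False by (simp add: e_def)
    then show ?thesis by (simp only: sd_period[OF Npos])
  qed
  have a1: "sd N (K - J) = sd N e" using sh[of 0] by simp
  have a2: "sd N (K + 1 - J) = sd N (e + 1)" using sh[of 1] by (simp add: algebra_simps)
  have a3: "sd N (K - (J + 1)) = sd N (e - 1)" using sh[of "-1"] by (simp add: algebra_simps)
  have a4: "sd N (K + 1 - (J + 1)) = sd N e" using a1 by simp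
  have V1: "wedge (ww N J) (complex_of_real s' * vv N K + complex_of_real t' * vv N (K + 1)) =
            s' * RR N * sd N e + t' * RR N * sd N (e + 1)"
    unfolding wedge_wv a1 a2 ..
  have V2: "wedge (ww N (J + 1)) (complex_of_real s' * vv N K + complex_of_real t' * vv N (K + 1)) =
            s' * RR N * sd N (e - 1) + t' * RR N * sd N e"
    unfolding wedge_wv a3 a4 ..
  show False
  proof (cases "e \<le> int M")
    case True
    have "sd N (e - 1) \<ge> 0" "sd N e \<ge> 0" using sd_nonneg[OF NM Mpos] True e1 by auto
    then have "s' * RR N * sd N (e - 1) + t' * RR N * sd N e \<ge> 0"
      using st RR_pos by (intro add_nonneg_nonneg mult_nonneg_nonneg) auto
    then show False using W2 V2 eq' by simp
  next
    case False
    have "sd N e \<le> 0" "sd N (e + 1) \<le> 0" using sd_nonpos[OF NM Mpos] False e1 by auto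
    then have "s' * RR N * sd N e + t' * RR N * sd N (e + 1) \<le> 0"
      using st RR_pos by (intro add_nonpos_nonpos mult_nonneg_nonpos) auto
    then show False using W1 V1 eq' by simp
  qed
qed

lemma Tk_inter:
  assumes "j < N" "k < N" "j \<noteq> k"
  shows "Tk j \<inter> Tk k \<subseteq> (\<Union>m\<in>{..N}. span {ww N (int m)})"
proof
  fix z assume z: "z \<in> Tk j \<inter> Tk k"
  obtain u s t where ust: "0 \<le> u" "0 \<le> s" "0 \<le> t" "u + s + t = 1"
    and zj: "z = s *\<^sub>R vv N (int j) + t *\<^sub>R vv N (int j + 1)"
    using z unfolding Tk_def convex_hull_3 by auto
  obtain u' s' t' where ust': "0 \<le> u'" "0 \<le> s'" "0 \<le> t'" "u' + s' + t' = 1"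
    and zk: "z = s' *\<^sub>R vv N (int k) + t' *\<^sub>R vv N (int k + 1)"
    using z unfolding Tk_def convex_hull_3 by auto
  show "z \<in> (\<Union>m\<in>{..N}. span {ww N (int m)})"
  proof (cases "s = 0")
    case True
    then have "z = (t * RR N) *\<^sub>R ww N (int j + 1)" using zj by (simp add: vv_def scaleR_conv_of_real)
    then have "z \<in> span {ww N (int j + 1)}" by (simp add: span_base span_scale)
    moreover have "int j + 1 = int (Suc j)" by simp
    ultimately have "z \<in> span {ww N (int (Suc j))}" by metis
    then show ?thesis using assms by (intro UN_I[of "Suc j"]) auto
  next
    case s0: False
    show ?thesis
    proof (cases "t = 0")
      case True
      then have "z = (s * RR N) *\<^sub>R ww N (int j)" using zj by (simp add: vv_def scaleR_conv_of_real)
      then have "z \<in> span {ww N (int j)}" by (simp add: span_base span_scale)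
      then show ?thesis using assms by (intro UN_I[of j]) auto
    next
      case False
      have "complex_of_real s * vv N (int j) + complex_of_real t * vv N (int j + 1) =
             complex_of_real s' * vv N (int k) + complex_of_real t' * vv N (int k + 1)"
        using zj zk by (simp add: scaleR_conv_of_real)
      moreover have "s > 0" "t > 0" using s0 False ust by auto
      ultimately have False using no_overlap[OF assms] ust' by blast
      then show ?thesis ..
    qed
  qed
qed

lemma negl_lines: "negligible (\<Union>m\<in>{..N}. span {ww N (int m)})"
proof (rule negligible_Union)
  show "finite ((\<lambda>m. span {ww N (int m)}) ` {..N})" by simp
next
  fix T assume "T \<in> (\<lambda>m. span {ww N (int m)}) ` {..N}"
  then obtain m where T: "T = span {ww N (int m)}" by auto
  have "dim T \<le> 1" unfolding T dim_span using dim_le_card'[of "{ww N (int m)}"] by simp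
  then show "negligible T" by (intro negligible_lowdim) simp
qed

lemma Tk_meas: "Tk k \<in> lmeasurable \<and> measure lebesgue (Tk k) = RR N ^ 2 * sd N 1 / 2"
proof -
  have "wedge (vv N (int k)) (vv N (int k + 1)) = RR N * RR N * sd N 1"
    unfolding vv_def wedge_scale wedge_ww[OF Npos] by simp
  then show ?thesis using triangle_measure[of "vv N (int k)" "vv N (int k + 1)"] sd1_pos
    by (simp add: Tk_def abs_mult power2_eq_square)
qed

lemma measure_Omega: "measure lebesgue (Omega_hat N) = real N / 4 * tan (pi / real N)"
proof -
  have "measure lebesgue (Omega_hat N) = (\<Sum>k\<in>{..<N}. measure lebesgue (Tk k))"
    unfolding Omega_eq_Union
  proof (rule measure_negligible_finite_Union_image)
    show "pairwise (\<lambda>x y. negligible (Tk x \<inter> Tk y)) {..<N}"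
      unfolding pairwise_def using Tk_inter negl_lines negligible_subset by (meson lessThan_iff)
  qed (use Tk_meas in auto)
  also have "\<dots> = real N * (RR N ^ 2 * sd N 1 / 2)" by (simp add: Tk_meas[THEN conjunct2])
  also have "\<dots> = real N / 4 * tan (pi / real N)"
  proof -
    have "sd N 1 = 2 * sin (pi / real N) * cos (pi / real N)"
      unfolding sd_def using sin_double[of "pi / real N"] by simp
    then show ?thesis using cos_a by (simp add: RR_def tan_def power2_eq_square field_simps)
  qed
  finally show ?thesis .
qed

lemma Omega_lebesgue: "Omega_hat N \<in> sets lebesgue"
proof -
  have "finite VV" unfolding VV_def by (rule finite_image_set) simp
  then have "compact (convex hull VV)" by (rule finite_imp_compact_convex_hull)
  then show ?thesis unfolding Omega_eq_hull by (intro fmeasurableD lmeasurable_compact)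
qed

end

theorem lemma5p2:
  fixes N :: nat
  assumes "N \<ge> 4" and "even N"
  shows "regular_ngon_inscribed N 0 (1 / (2 * cos (pi / real N))) (Omega_hat N)
         \<and> Omega_hat N \<in> sets lebesgue
         \<and> measure lebesgue (Omega_hat N) = real N / 4 * tan (pi / real N)"
proof -
  define M where "M = N div 2"
  have NM: "N = 2 * M" using assms(2) by (simp add: M_def)
  have M2: "M \<ge> 2" using assms(1) by (simp add: M_def)
  have "regular_ngon_inscribed N 0 (1 / (2 * cos (pi / real N))) (Omega_hat N)"
    unfolding regular_ngon_inscribed_def
  proof (rule exI[of _ "pi / 2 + pi / real N"])
    show "Omega_hat N = convex hull {0 + complex_of_real (1 / (2 * cos (pi / real N))) *
     cis ((pi / 2 + pi / real N) + 2 * pi * real k / real N) | k. k < N}"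
      unfolding Omega_eq_hull[OF NM M2] VV_def[OF NM M2] ..
  qed
  then show ?thesis using Omega_lebesgue[OF NM M2] measure_Omega[OF NM M2] by simp
qed

end
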